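(* Let $\mu$ be a partition of $k$. Then, as functions on Young diagrams, $\mathrm{Ko}_\mu=\sum_{\nu\vdash k}K^\nu_\mu\,S^\star_\nu$.
   Context: $K^\lambda_\tau$ is the Kostka number: the number of semi-standard Young tableaux of shape $\lambda$ and type $\tau$ (exactly $\tau_i$ entries equal to $i$). $(x)_a=x(x-1)\cdots(x-a+1)$. For $\mu\vdash k$ and $|\lambda|=n$, $\mathrm{Ko}_\mu(\lambda)=(n)_k\,K^\lambda_{\mu1^{n-k}}/K^\lambda_{1^n}$ if $n\ge k$ (where $\mu1^{n-k}$ is $\mu$ with $n-k$ parts $1$ appended) and $0$ otherwise. The shifted Schur function $S^\star_\nu$ is given for $n\ge\ell(\nu)$ by $S^\star_\nu(x_1,\dots,x_n)=\det\big((x_i+n-i)_{\nu_j+n-j}\big)/\det\big((x_i+n-i)_{n-j}\big)$, and evaluated at a Young diagram $\lambda$ with $\ell$ rows as $S^\star_\nu(\lambda_1,\dots,\lambda_\ell,0,\dots,0)$ (the value does not depend on the number of added zeros). *)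

theory Defs
  imports Complex_Main "Jordan_Normal_Form.Determinant"
begin

definition is_partition :: "nat list \<Rightarrow> bool" where
  "is_partition lam \<longleftrightarrow> sorted_wrt (\<ge>) lam \<and> 0 \<notin> set lam"

definition partitions_of :: "nat \<Rightarrow> nat list set" where
  "partitions_of k = {nu. is_partition nu \<and> sum_list nu = k}"

text \<open>Cells of a Young diagram (0-based row i, column j).\<close>
definition cells :: "nat list \<Rightarrow> (nat \<times> nat) set" where
  "cells lam = {(i, j). i < length lam \<and> j < lam ! i}"

text \<open>Semi-standard Young tableau of shape lam and type tau (entries 1..length tau,
  exactly tau!(c-1) entries equal to c); the function is 0 outside the diagram.\<close>
definition is_ssyt :: "nat list \<Rightarrow> nat list \<Rightarrow> (nat \<Rightarrow> nat \<Rightarrow> nat) \<Rightarrow> bool" where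
  "is_ssyt lam tau T \<longleftrightarrow>
     (\<forall>i j. (i, j) \<notin> cells lam \<longrightarrow> T i j = 0) \<and>
     (\<forall>(i, j) \<in> cells lam. 1 \<le> T i j \<and> T i j \<le> length tau) \<and>
     (\<forall>i j. (i, Suc j) \<in> cells lam \<longrightarrow> T i j \<le> T i (Suc j)) \<and>
     (\<forall>i j. (Suc i, j) \<in> cells lam \<longrightarrow> T i j < T (Suc i) j) \<and>
     (\<forall>c \<in> {1..length tau}. card {(i, j) \<in> cells lam. T i j = c} = tau ! (c - 1))"

definition kostka :: "nat list \<Rightarrow> nat list \<Rightarrow> nat" where
  "kostka lam tau = card {T. is_ssyt lam tau T}"

definition ffact_r :: "real \<Rightarrow> nat \<Rightarrow> real" where
  "ffact_r x a = (\<Prod>i<a. (x - of_nat i))"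

definition Ko :: "nat list \<Rightarrow> nat list \<Rightarrow> real" where
  "Ko mu lam = (let n = sum_list lam; k = sum_list mu in
     if n \<ge> k then ffact_r (real n) k * real (kostka lam (mu @ replicate (n - k) 1))
                   / real (kostka lam (replicate n 1))
     else 0)"

text \<open>Shifted Schur function in n variables x_1..x_n (x given as a function on 0-based
  indices, x i = x_(i+1)), and nu_j = 0 for j > length nu.\<close>
definition shifted_schur :: "nat list \<Rightarrow> nat \<Rightarrow> (nat \<Rightarrow> real) \<Rightarrow> real" where
  "shifted_schur nu n x =
     det (mat n n (\<lambda>(i, j). ffact_r (x i + real n - real (Suc i))
                                 ((if j < length nu then nu ! j else 0) + n - Suc j)))
     / det (mat n n (\<lambda>(i, j). ffact_r (x i + real n - real (Suc i)) (n - Suc j)))"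

definition shifted_schur_at :: "nat list \<Rightarrow> nat list \<Rightarrow> real" where
  "shifted_schur_at nu lam =
     shifted_schur nu (max (length lam) (length nu))
       (\<lambda>i. if i < length lam then real (lam ! i) else 0)"

end

theory Submission
  imports Defs
begin


lemma det_mat_leibniz:
  "det (mat n n f) = (\<Sum>p\<in>{p. p permutes {0..<n}}. signof p * (\<Prod>i=0..<n. f (i, p i)))"
proof -
  have "det (mat n n f) = (\<Sum>p\<in>{p. p permutes {0..<n}}. signof p * (\<Prod>i=0..<n. mat n n f $$ (i, p i)))"
    by (rule det_def') simp
  also have "\<dots> = (\<Sum>p\<in>{p. p permutes {0..<n}}. signof p * (\<Prod>i=0..<n. f (i, p i)))"
  proof (rule sum.cong[OF refl])
    fix p assume "p \<in> {p. p permutes {0..<n}}"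
    hence "\<And>i. i < n \<Longrightarrow> p i < n" by (auto dest: permutes_in_image)
    thus "signof p * (\<Prod>i=0..<n. mat n n f $$ (i, p i)) = signof p * (\<Prod>i=0..<n. f (i, p i))"
      by (auto intro!: prod.cong)
  qed
  finally show ?thesis .
qed

lemma prod_modify_one:
  assumes "finite A" "i \<in> A"
  shows "(\<Prod>i'\<in>A. if i' = i then c * g i' else g i') = c * prod g A"
proof -
  have "(\<Prod>i'\<in>A. if i' = i then c * g i' else g i') = (\<Prod>i'\<in>A. (if i' = i then c else 1) * g i')"
    by (rule prod.cong) auto
  also have "\<dots> = (\<Prod>i'\<in>A. (if i' = i then c else 1)) * prod g A"
    by (rule prod.distrib)
  also have "(\<Prod>i'\<in>A. (if i' = i then c else 1)) = c"
    using assms by (simp add: prod.delta)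
  finally show ?thesis .
qed

lemma det_row_scale_sum:
  fixes f :: "nat \<Rightarrow> nat \<Rightarrow> real" and a b :: "nat \<Rightarrow> real"
  shows "(\<Sum>i<n. det (mat n n (\<lambda>(i',j). if i' = i then (a i - b j) * f i' j else f i' j)))
       = ((\<Sum>i<n. a i) - (\<Sum>j<n. b j)) * det (mat n n (\<lambda>(i,j). f i j))"
proof -
  let ?P = "{p. p permutes {0..<n}}"
  have "(\<Sum>i<n. det (mat n n (\<lambda>(i',j). if i' = i then (a i - b j) * f i' j else f i' j)))
     = (\<Sum>i<n. \<Sum>p\<in>?P. signof p * ((a i - b (p i)) * (\<Prod>i'=0..<n. f i' (p i'))))"
  proof (rule sum.cong[OF refl])
    fix i assume i: "i \<in> {..<n}"
    show "det (mat n n (\<lambda>(i',j). if i' = i then (a i - b j) * f i' j else f i' j))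
       = (\<Sum>p\<in>?P. signof p * ((a i - b (p i)) * (\<Prod>i'=0..<n. f i' (p i'))))"
      unfolding det_mat_leibniz
    proof (rule sum.cong[OF refl])
      fix p
      have "(\<Prod>i'=0..<n. (case (i', p i') of (i', j) \<Rightarrow> if i' = i then (a i - b j) * f i' j else f i' j))
          = (\<Prod>i'=0..<n. if i' = i then (a i - b (p i)) * f i' (p i') else f i' (p i'))"
        by (rule prod.cong) auto
      also have "\<dots> = (a i - b (p i)) * (\<Prod>i'=0..<n. f i' (p i'))"
        using i by (intro prod_modify_one) auto
      finally show "signof p * (\<Prod>i'=0..<n. (case (i', p i') of (i', j) \<Rightarrow> if i' = i then (a i - b j) * f i' j else f i' j))
        = signof p * ((a i - b (p i)) * (\<Prod>i'=0..<n. f i' (p i')))" by simp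
    qed
  qed
  also have "\<dots> = (\<Sum>p\<in>?P. signof p * (\<Sum>i<n. (a i - b (p i))) * (\<Prod>i'=0..<n. f i' (p i')))"
    by (subst sum.swap) (simp add: sum_distrib_left sum_distrib_right mult.assoc)
  also have "\<dots> = (\<Sum>p\<in>?P. ((\<Sum>i<n. a i) - (\<Sum>j<n. b j)) * (signof p * (\<Prod>i'=0..<n. f i' (p i'))))"
  proof (rule sum.cong[OF refl])
    fix p assume "p \<in> ?P"
    hence bij: "bij_betw p {..<n} {..<n}"
      by (auto intro: permutes_imp_bij simp: atLeast0LessThan)
    have "(\<Sum>i<n. b (p i)) = (\<Sum>j<n. b j)"
      by (rule sum.reindex_bij_betw[OF bij])
    hence "(\<Sum>i<n. (a i - b (p i))) = (\<Sum>i<n. a i) - (\<Sum>j<n. b j)"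
      by (simp add: sum_subtractf)
    thus "signof p * (\<Sum>i<n. (a i - b (p i))) * (\<Prod>i'=0..<n. f i' (p i'))
        = ((\<Sum>i<n. a i) - (\<Sum>j<n. b j)) * (signof p * (\<Prod>i'=0..<n. f i' (p i')))"
      by simp
  qed
  also have "\<dots> = ((\<Sum>i<n. a i) - (\<Sum>j<n. b j)) * det (mat n n (\<lambda>(i,j). f i j))"
    unfolding det_mat_leibniz by (simp add: sum_distrib_left)
  finally show ?thesis .
qed

lemma det_zero_block:
  fixes f :: "nat \<times> nat \<Rightarrow> real"
  assumes i0: "i0 < n" and z: "\<And>i j. i0 \<le> i \<Longrightarrow> i < n \<Longrightarrow> j \<le> i0 \<Longrightarrow> f (i,j) = 0"
  shows "det (mat n n f) = 0"
  unfolding det_mat_leibniz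
proof (rule sum.neutral, rule ballI)
  fix p assume "p \<in> {p. p permutes {0..<n}}"
  hence p: "p permutes {0..<n}" by simp
  have "\<exists>i\<in>{0..<n}. f (i, p i) = 0"
  proof (rule ccontr)
    assume "\<not> ?thesis"
    hence nz: "\<And>i. i < n \<Longrightarrow> f (i, p i) \<noteq> 0" by auto
    have "{0..i0} \<subseteq> p ` {0..<i0}"
    proof
      fix j assume j: "j \<in> {0..i0}"
      hence "j \<in> {0..<n}" using i0 by auto
      then obtain i where i: "i \<in> {0..<n}" "p i = j"
        using permutes_image[OF p] by (metis imageE)
      have "i < i0"
      proof (rule ccontr)
        assume "\<not> i < i0"
        hence "f (i, p i) = 0" using z[of i "p i"] i j by auto
        with nz i show False by auto
      qed
      thus "j \<in> p ` {0..<i0}" using i by auto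
    qed
    hence "card {0..i0} \<le> card (p ` {0..<i0})" by (intro card_mono) auto
    also have "\<dots> \<le> card {0..<i0}" by (rule card_image_le) auto
    finally show False by simp
  qed
  thus "signof p * (\<Prod>i=0..<n. f (i, p i)) = 0" by (simp add: prod_zero)
qed

lemma det_equal_rows:
  fixes f :: "nat \<times> nat \<Rightarrow> real"
  assumes "Suc i < n" and "\<And>j. j < n \<Longrightarrow> f (i,j) = f (Suc i, j)"
  shows "det (mat n n f) = 0"
proof (rule det_identical_rows[of _ n i "Suc i"])
  show "row (mat n n f) i = row (mat n n f) (Suc i)"
    using assms by (intro eq_vecI) auto
qed (use assms in auto)

definition pad :: "nat list \<Rightarrow> nat \<Rightarrow> nat" where
  "pad l i = (if i < length l then l ! i else 0)"

definition rf :: "int \<Rightarrow> real" where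
  "rf z = (if z < 0 then 0 else 1 / fact (nat z))"

lemma rf_pred: "rf (z - 1) = of_int z * rf z"
proof (cases "z \<le> 0")
  case True thus ?thesis by (cases "z = 0") (auto simp: rf_def)
next
  case False
  define m where "m = nat (z - 1)"
  have m: "z = int (Suc m)" using False by (simp add: m_def)
  have "nat z = Suc m" "nat (z - 1) = m" using m by simp_all
  moreover have "(fact (Suc m) :: real) = real (Suc m) * fact m" by simp
  moreover have "(fact m :: real) + fact m * real m \<noteq> 0"
    by (metis add_pos_nonneg fact_gt_zero less_numeral_extra(3) mult_nonneg_nonneg of_nat_0_le_iff order_less_le)
  ultimately show ?thesis using m by (simp add: rf_def field_simps)
qed

definition Adet :: "nat \<Rightarrow> (nat \<Rightarrow> int) \<Rightarrow> nat list \<Rightarrow> real" where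
  "Adet n x nu = det (mat n n (\<lambda>(i,j). rf (x i - int (pad nu j) - int i + int j)))"

lemma Adet_rec:
  "(\<Sum>i<n. Adet n (x(i := x i - 1)) nu) = (of_int (\<Sum>i<n. x i) - real (\<Sum>j<n. pad nu j)) * Adet n x nu"
proof -
  define g where "g = (\<lambda>i j. rf (x i - int (pad nu j) - int i + int j))"
  define a where "a = (\<lambda>i. real_of_int (x i) - real i)"
  define b where "b = (\<lambda>j. real (pad nu j) - real j)"
  have pt: "rf ((x(i := x i - 1)) i' - int (pad nu j) - int i' + int j)
        = (if i' = i then (a i - b j) * g i' j else g i' j)" for i i' j
  proof (cases "i' = i")
    case True
    have "rf ((x i - 1) - int (pad nu j) - int i + int j) = rf ((x i - int (pad nu j) - int i + int j) - 1)"
      by (simp add: algebra_simps)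
    also have "\<dots> = of_int (x i - int (pad nu j) - int i + int j) * rf (x i - int (pad nu j) - int i + int j)"
      by (rule rf_pred)
    finally show ?thesis using True by (simp add: a_def b_def g_def)
  qed (simp add: g_def)
  have eq: "Adet n (x(i := x i - 1)) nu = det (mat n n (\<lambda>(i',j). if i' = i then (a i - b j) * g i' j else g i' j))" for i
    unfolding Adet_def pt by simp
  have "(\<Sum>i<n. Adet n (x(i := x i - 1)) nu) = ((\<Sum>i<n. a i) - (\<Sum>j<n. b j)) * det (mat n n (\<lambda>(i,j). g i j))"
    unfolding eq by (rule det_row_scale_sum)
  also have "(\<Sum>i<n. a i) - (\<Sum>j<n. b j) = of_int (\<Sum>i<n. x i) - real (\<Sum>j<n. pad nu j)"
    by (simp add: sum_subtractf a_def b_def)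
  finally show ?thesis unfolding Adet_def g_def by simp
qed

abbreviation wd :: "nat list \<Rightarrow> bool" where "wd l \<equiv> sorted_wrt (\<ge>) l"

lemma pad_mono: assumes "wd l" "i \<le> i'" shows "pad l i' \<le> pad l i"
proof -
  have "l ! i' \<le> l ! i" if "i < i'" "i' < length l" using assms(1) that
    by (simp add: sorted_wrt_iff_nth_less)
  thus ?thesis using assms(2) unfolding pad_def
    by (cases "i = i'") auto
qed

lemma Adet_self: "Adet n (\<lambda>i. int (pad l i)) l = 1" if "wd l"
proof -
  let ?A = "mat n n (\<lambda>(i,j). rf (int (pad l i) - int (pad l j) - int i + int j))"
  have ut: "upper_triangular ?A"
    unfolding upper_triangular_def
  proof (intro allI impI)
    fix i j assume "i < dim_row ?A" "j < i"
    moreover have "pad l i \<le> pad l j" using pad_mono[OF that] \<open>j < i\<close> by simp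
    ultimately show "?A $$ (i,j) = 0" by (simp add: rf_def)
  qed
  have "det ?A = prod_list (diag_mat ?A)" by (rule det_upper_triangular[OF ut, of n]) simp
  also have "diag_mat ?A = map (\<lambda>i. 1) [0..<n]"
    unfolding diag_mat_def by (auto simp: rf_def)
  also have "prod_list (map (\<lambda>i. (1::real)) [0..<n]) = 1" by (induct n) auto
  finally show ?thesis unfolding Adet_def .
qed

lemma Adet_zero_less:
  assumes "wd l" "wd nu" "i0 < n" "pad l i0 < pad nu i0"
  shows "Adet n (\<lambda>i. int (pad l i)) nu = 0"
  unfolding Adet_def
proof (rule det_zero_block[OF assms(3)], clarsimp)
  fix i j assume "i0 \<le> i" "i < n" "j \<le> i0"
  have "pad l i \<le> pad l i0" by (rule pad_mono) fact+
  moreover have "pad nu i0 \<le> pad nu j" by (rule pad_mono) fact+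
  ultimately show "rf (int (pad l i) - int (pad nu j) - int i + int j) = 0"
    using assms(4) \<open>i0 \<le> i\<close> \<open>j \<le> i0\<close> by (simp add: rf_def)
qed

lemma Adet_vanish1:
  assumes "wd l" "i < n" "pad l i = 0"
  shows "Adet n ((\<lambda>i. int (pad l i))(i := int (pad l i) - 1)) nu = 0"
proof -
  have z: "pad l i' = 0" if "i \<le> i'" for i'
    using pad_mono[OF assms(1) that] assms(3) by simp
  show ?thesis unfolding Adet_def
    by (rule det_zero_block[OF assms(2)]) (use z in \<open>auto simp: rf_def\<close>)
qed

lemma Adet_vanish2:
  assumes "Suc i < n" "pad l (Suc i) = pad l i"
  shows "Adet n ((\<lambda>i. int (pad l i))(i := int (pad l i) - 1)) nu = 0"
proof -
  let ?f = "\<lambda>(i', j). rf (((\<lambda>i. int (pad l i))(i := int (pad l i) - 1)) i' - int (pad nu j) - int i' + int j)"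
  have "det (mat n n ?f) = 0"
    by (rule det_equal_rows[OF assms(1)]) (use assms(2) in \<open>simp add: algebra_simps\<close>)
  thus ?thesis unfolding Adet_def .
qed



lemma cells_Sigma: "cells l = Sigma {..<length l} (\<lambda>i. {..<l ! i})"
  unfolding cells_def by auto

lemma finite_cells: "finite (cells l)"
  unfolding cells_Sigma by auto

lemma cells_pad: "cells l = {(i,j). j < pad l i}"
  unfolding cells_def pad_def by (auto split: if_splits)

lemma kostka_cells_eq: "cells l = cells l' \<Longrightarrow> kostka l t = kostka l' t"
  unfolding kostka_def is_ssyt_def by simp

lemma finite_ssyt: "finite {T. is_ssyt l t T}"
proof -
  let ?D = "cells l"
  let ?h = "\<lambda>T. restrict (\<lambda>(a,b). T a b) ?D"
  let ?S = "{T. is_ssyt l t T}"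
  have inj: "inj_on ?h ?S"
  proof (rule inj_onI)
    fix T T' assume T: "T \<in> ?S" and T': "T' \<in> ?S" and eq: "?h T = ?h T'"
    show "T = T'"
    proof (intro ext)
      fix a b
      show "T a b = T' a b"
      proof (cases "(a,b) \<in> ?D")
        case True
        have "?h T (a,b) = ?h T' (a,b)" using eq by simp
        thus ?thesis using True by simp
      next
        case False
        thus ?thesis using T T' unfolding is_ssyt_def by auto
      qed
    qed
  qed
  have "?h ` ?S \<subseteq> PiE ?D (\<lambda>_. {0..length t})"
    unfolding is_ssyt_def by (auto simp: PiE_def extensional_def)
  hence "finite (?h ` ?S)" by (rule finite_subset) (intro finite_PiE finite_cells, auto)
  thus ?thesis using inj by (simp add: finite_image_iff)
qed

definition upd :: "(nat \<Rightarrow> nat \<Rightarrow> nat) \<Rightarrow> nat \<Rightarrow> nat \<Rightarrow> nat \<Rightarrow> nat \<Rightarrow> nat \<Rightarrow> nat" where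
  "upd T i p v = T(i := (T i)(p := v))"

lemma upd_apply[simp]: "upd T i p v a b = (if a = i \<and> b = p then v else T a b)"
  unfolding upd_def by auto

definition removable :: "nat list \<Rightarrow> nat \<Rightarrow> bool" where
  "removable l i \<longleftrightarrow> i < length l \<and> 0 < l ! i \<and> pad l (Suc i) < l ! i"

definition dec :: "nat list \<Rightarrow> nat \<Rightarrow> nat list" where
  "dec l i = l[i := l ! i - 1]"

lemma pad_dec: "i < length l \<Longrightarrow> pad (dec l i) = (pad l)(i := pad l i - 1)"
  unfolding dec_def pad_def by (auto simp: fun_eq_iff nth_list_update)

lemma cells_dec:
  assumes "removable l i"
  shows "cells (dec l i) = cells l - {(i, l ! i - 1)}"
  using assms unfolding cells_pad pad_dec[OF assms[unfolded removable_def, THEN conjunct1]] removable_def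
  by (auto simp: pad_def split: if_splits)

lemma wd_dec:
  assumes "wd l" "removable l i"
  shows "wd (dec l i)"
proof -
  have r: "i < length l" "0 < l ! i" "pad l (Suc i) < l ! i" using assms(2) unfolding removable_def by auto
  have s: "\<And>a b. a < b \<Longrightarrow> b < length l \<Longrightarrow> l ! b \<le> l ! a"
    using assms(1) by (simp add: sorted_wrt_iff_nth_less)
  show ?thesis unfolding sorted_wrt_iff_nth_less dec_def
  proof (intro allI impI)
    fix a b assume ab: "a < b" "b < length (l[i := l ! i - 1])"
    have t: "l ! b \<le> pad l (Suc i)" if "i < b" "b < length l"
      using pad_mono[OF assms(1), of "Suc i" b] that by (simp add: pad_def)
    show "l[i := l ! i - 1] ! b \<le> l[i := l ! i - 1] ! a"
    proof (cases "b = i")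
      case False
      thus ?thesis using ab s[of a b] t r by (auto simp: nth_list_update)
    next
      case True
      thus ?thesis using ab s[of a b] by (auto simp: nth_list_update)
    qed
  qed
qed

lemma sum_list_dec:
  assumes "removable l i" shows "sum_list (dec l i) = sum_list l - 1"
  using assms unfolding removable_def dec_def
  by (simp add: sum_list_update)

lemma length_dec[simp]: "length (dec l i) = length l"
  unfolding dec_def by simp



lemma cells_left: "(a, Suc b) \<in> cells l \<Longrightarrow> (a, b) \<in> cells l"
  unfolding cells_def by auto

lemma cells_up: "wd l \<Longrightarrow> (Suc a, b) \<in> cells l \<Longrightarrow> (a, b) \<in> cells l"
  unfolding cells_pad using pad_mono[of l a "Suc a"] by auto

lemma ssyt_fwd:
  assumes wl: "wd l" and r: "removable l i" and T: "is_ssyt l (t @ [1]) T"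
    and Tc: "T i (l ! i - 1) = Suc (length t)"
  shows "is_ssyt (dec l i) t (upd T i (l ! i - 1) 0)"
proof -
  define p where "p = l ! i - 1"
  define c where "c = Suc (length t)"
  have ip: "(i, p) \<in> cells l" using r unfolding removable_def cells_def p_def by auto
  have D': "cells (dec l i) = cells l - {(i,p)}" using cells_dec[OF r] p_def by simp
  have wd': "wd (dec l i)" by (rule wd_dec[OF wl r])
  note T' = T[unfolded is_ssyt_def]
  have card1: "card {(a, b) \<in> cells l. T a b = c} = 1"
    using T'[THEN conjunct2, THEN conjunct2, THEN conjunct2, THEN conjunct2, rule_format, of c]
    by (simp add: c_def nth_append)
  have single: "{(a, b) \<in> cells l. T a b = c} = {(i,p)}"
  proof -
    from card1 obtain x where x: "{(a, b) \<in> cells l. T a b = c} = {x}" by (rule card_1_singletonE)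
    have "(i,p) \<in> {(a, b) \<in> cells l. T a b = c}" using ip Tc p_def c_def by simp
    thus ?thesis using x by auto
  qed
  have notc: "T a b \<noteq> c" if "(a,b) \<in> cells l" "(a,b) \<noteq> (i,p)" for a b
    using single that by blast
  show ?thesis
    unfolding is_ssyt_def p_def[symmetric] D'
  proof (intro conjI allI impI ballI)
    fix a b assume "(a, b) \<notin> cells l - {(i, p)}"
    thus "upd T i p 0 a b = 0" using T' by auto
  next
    fix x assume x: "x \<in> cells l - {(i, p)}"
    obtain a b where ab: "x = (a,b)" by force
    have "1 \<le> T a b \<and> T a b \<le> length (t @ [1])" using T' x ab by auto
    moreover have "T a b \<noteq> c" using notc x ab by auto
    ultimately show "case x of (a, b) \<Rightarrow> 1 \<le> upd T i p 0 a b \<and> upd T i p 0 a b \<le> length t"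
      using x ab by (auto simp: c_def)
  next
    fix a b assume h: "(a, Suc b) \<in> cells l - {(i, p)}"
    hence "(a, b) \<in> cells l - {(i, p)}"
      using cells_left[of a b "dec l i"] D' by auto
    thus "upd T i p 0 a b \<le> upd T i p 0 a (Suc b)" using h T' by auto
  next
    fix a b assume h: "(Suc a, b) \<in> cells l - {(i, p)}"
    hence "(a, b) \<in> cells l - {(i, p)}"
      using cells_up[OF wd', of a b] D' by auto
    thus "upd T i p 0 a b < upd T i p 0 (Suc a) b" using h T' by auto
  next
    fix c' assume c': "c' \<in> {1..length t}"
    have "{(a, b) \<in> cells l - {(i, p)}. upd T i p 0 a b = c'} = {(a, b) \<in> cells l. T a b = c'}"
      using c' Tc p_def c_def by auto
    moreover have "(t @ [1]) ! (c' - 1) = t ! (c' - 1)" using c' by (auto simp: nth_append)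
    ultimately show "card {(a, b) \<in> cells l - {(i, p)}. upd T i p 0 a b = c'} = t ! (c' - 1)"
      using T'[THEN conjunct2, THEN conjunct2, THEN conjunct2, THEN conjunct2, rule_format, of c'] c'
      by simp
  qed
qed

lemma ssyt_bwd:
  assumes wl: "wd l" and r: "removable l i" and T: "is_ssyt (dec l i) t T"
  shows "is_ssyt l (t @ [1]) (upd T i (l ! i - 1) (Suc (length t)))"
proof -
  define p where "p = l ! i - 1"
  define c where "c = Suc (length t)"
  have ip: "(i, p) \<in> cells l" using r unfolding removable_def cells_def p_def by auto
  have lip: "l ! i = Suc p" using r unfolding removable_def p_def by auto
  have below: "(Suc i, p) \<notin> cells l" using r unfolding removable_def cells_pad p_def by auto
  have D': "cells (dec l i) = cells l - {(i,p)}" using cells_dec[OF r] p_def by simp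
  note T' = T[unfolded is_ssyt_def D']
  have Tle: "T a b \<le> length t" if "(a,b) \<in> cells l - {(i,p)}" for a b using T' that by auto
  show ?thesis
    unfolding is_ssyt_def p_def[symmetric] c_def[symmetric]
  proof (intro conjI allI impI ballI)
    fix a b assume "(a, b) \<notin> cells l"
    thus "upd T i p c a b = 0" using T' ip by auto
  next
    fix x assume x: "x \<in> cells l"
    obtain a b where ab: "x = (a,b)" by force
    show "case x of (a, b) \<Rightarrow> 1 \<le> upd T i p c a b \<and> upd T i p c a b \<le> length (t @ [1])"
    proof -
      have "(a,b) \<noteq> (i,p) \<Longrightarrow> 1 \<le> T a b \<and> T a b \<le> length t" using T' x ab by auto
      thus ?thesis using ab by (auto simp: c_def)
    qed
  next
    fix a b assume h: "(a, Suc b) \<in> cells l"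
    have ab: "(a, b) \<in> cells l" using cells_left[OF h] .
    show "upd T i p c a b \<le> upd T i p c a (Suc b)"
    proof (cases "(a, Suc b) = (i, p)")
      case True
      hence "(a,b) \<in> cells l - {(i,p)}" using ab by auto
      thus ?thesis using True Tle[of a b] by (auto simp: c_def)
    next
      case False
      have "(a,b) \<noteq> (i,p)" using h lip unfolding cells_def by auto
      thus ?thesis using False h ab T' by auto
    qed
  next
    fix a b assume h: "(Suc a, b) \<in> cells l"
    have ab: "(a, b) \<in> cells l" using cells_up[OF wl h] .
    show "upd T i p c a b < upd T i p c (Suc a) b"
    proof (cases "(Suc a, b) = (i, p)")
      case True
      hence "(a,b) \<in> cells l - {(i,p)}" using ab by auto
      thus ?thesis using True Tle[of a b] by (auto simp: c_def)
    next
      case False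
      have "(a,b) \<noteq> (i,p)" using h below by auto
      thus ?thesis using False h ab T' by auto
    qed
  next
    fix c' assume c': "c' \<in> {1..length (t @ [1])}"
    show "card {(a, b) \<in> cells l. upd T i p c a b = c'} = (t @ [1]) ! (c' - 1)"
    proof (cases "c' = c")
      case True
      have "{(a, b) \<in> cells l. upd T i p c a b = c'} = {(i,p)}"
      proof (intro equalityI subsetI)
        fix x assume x: "x \<in> {(a, b) \<in> cells l. upd T i p c a b = c'}"
        obtain a b where ab: "x = (a,b)" by force
        show "x \<in> {(i,p)}"
        proof (rule ccontr)
          assume "x \<notin> {(i,p)}"
          hence "(a,b) \<in> cells l - {(i,p)}" "T a b = c" using x ab True by auto
          thus False using Tle[of a b] by (simp add: c_def)
        qed
      qed (use ip True in auto)
      thus ?thesis using True by (simp add: c_def nth_append)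
    next
      case False
      hence c'': "c' \<in> {1..length t}" using c' by (auto simp: c_def)
      have "{(a, b) \<in> cells l. upd T i p c a b = c'} = {(a, b) \<in> cells l - {(i, p)}. T a b = c'}"
        using False by auto
      moreover have "(t @ [1]) ! (c' - 1) = t ! (c' - 1)" using c'' by (auto simp: nth_append)
      ultimately show ?thesis
        using T'[THEN conjunct2, THEN conjunct2, THEN conjunct2, THEN conjunct2, rule_format, of c'] c''
        by simp
    qed
  qed
qed



lemma ssyt_single:
  assumes T: "is_ssyt l (t @ [1]) T"
  shows "\<exists>x. {(a, b) \<in> cells l. T a b = Suc (length t)} = {x}"
proof -
  have "card {(a, b) \<in> cells l. T a b = Suc (length t)} = 1"
    using T[unfolded is_ssyt_def, THEN conjunct2, THEN conjunct2, THEN conjunct2, THEN conjunct2,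
      rule_format, of "Suc (length t)"]
    by (simp add: nth_append)
  thus ?thesis by (meson card_1_singletonE)
qed

lemma ssyt_corner:
  assumes wl: "wd l" and T: "is_ssyt l (t @ [1]) T"
  shows "\<exists>i. removable l i \<and> T i (l ! i - 1) = Suc (length t)"
proof -
  let ?c = "Suc (length t)"
  obtain x where x: "{(a, b) \<in> cells l. T a b = ?c} = {x}" using ssyt_single[OF T] by blast
  obtain i j where ij: "x = (i,j)" by force
  have ijc: "(i,j) \<in> cells l" "T i j = ?c" using x ij by auto
  note T' = T[unfolded is_ssyt_def]
  have le: "T a b \<le> ?c" if "(a,b) \<in> cells l" for a b using T' that by auto
  have j: "j = l ! i - 1"
  proof (rule ccontr)
    assume "j \<noteq> l ! i - 1"
    hence h: "(i, Suc j) \<in> cells l" using ijc(1) unfolding cells_def by auto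
    hence "T i j \<le> T i (Suc j)" using T' by auto
    hence "T i (Suc j) = ?c" using le[OF h] ijc by auto
    hence "(i, Suc j) \<in> {(a, b) \<in> cells l. T a b = ?c}" using h by auto
    thus False using x ij by auto
  qed
  have "removable l i"
    unfolding removable_def
  proof (intro conjI)
    show "i < length l" "0 < l ! i" using ijc(1) unfolding cells_def by auto
    show "pad l (Suc i) < l ! i"
    proof (rule ccontr)
      assume "\<not> pad l (Suc i) < l ! i"
      moreover have "i < length l" using ijc(1) unfolding cells_def by auto
      ultimately have h: "(Suc i, j) \<in> cells l" using ijc(1) unfolding cells_pad by (auto simp: pad_def)
      hence "T i j < T (Suc i) j" using T' by auto
      thus False using le[OF h] ijc by auto
    qed
  qed
  thus ?thesis using ijc j by auto
qed

lemma kostka_corner: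
  assumes wl: "wd l"
  shows "kostka l (t @ [1]) = (\<Sum>i\<in>{i. removable l i}. kostka (dec l i) t)"
proof -
  let ?c = "Suc (length t)"
  let ?S = "{T. is_ssyt l (t @ [1]) T}"
  define Si where "Si i = {T \<in> ?S. T i (l ! i - 1) = ?c}" for i
  let ?R = "{i. removable l i}"
  have finR: "finite ?R" by (rule finite_subset[of _ "{..<length l}"]) (auto simp: removable_def)
  have S: "?S = (\<Union>i\<in>?R. Si i)" using ssyt_corner[OF wl] unfolding Si_def by blast
  have disj: "Si i \<inter> Si i' = {}" if "i \<in> ?R" "i' \<in> ?R" "i \<noteq> i'" for i i'
  proof (rule ccontr)
    assume "Si i \<inter> Si i' \<noteq> {}"
    then obtain T where T: "T \<in> Si i" "T \<in> Si i'" by blast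
    obtain x where x: "{(a, b) \<in> cells l. T a b = ?c} = {x}" using ssyt_single T unfolding Si_def by blast
    have "(i, l ! i - 1) \<in> cells l" "(i', l ! i' - 1) \<in> cells l"
      using that unfolding removable_def cells_def by auto
    hence "(i, l ! i - 1) \<in> {x}" "(i', l ! i' - 1) \<in> {x}" using x T unfolding Si_def by blast+
    thus False using that by auto
  qed
  have card_Si: "card (Si i) = kostka (dec l i) t" if i: "i \<in> ?R" for i
  proof -
    have r: "removable l i" using i by simp
    have "bij_betw (\<lambda>T. upd T i (l ! i - 1) 0) (Si i) {T. is_ssyt (dec l i) t T}"
    proof (rule bij_betw_byWitness[where f' = "\<lambda>T. upd T i (l ! i - 1) ?c"])
      show "\<forall>T\<in>Si i. upd (upd T i (l ! i - 1) 0) i (l ! i - 1) ?c = T"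
        unfolding Si_def by (auto simp: fun_eq_iff)
      have "T i (l ! i - 1) = 0" if "is_ssyt (dec l i) t T" for T
        using that cells_dec[OF r] unfolding is_ssyt_def by auto
      thus "\<forall>T\<in>{T. is_ssyt (dec l i) t T}. upd (upd T i (l ! i - 1) ?c) i (l ! i - 1) 0 = T"
        by (auto simp: fun_eq_iff)
      show "(\<lambda>T. upd T i (l ! i - 1) 0) ` Si i \<subseteq> {T. is_ssyt (dec l i) t T}"
        using ssyt_fwd[OF wl r] unfolding Si_def by auto
      show "(\<lambda>T. upd T i (l ! i - 1) ?c) ` {T. is_ssyt (dec l i) t T} \<subseteq> Si i"
        using ssyt_bwd[OF wl r] unfolding Si_def by auto
    qed
    thus ?thesis unfolding kostka_def by (rule bij_betw_same_card)
  qed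
  have "kostka l (t @ [1]) = card (\<Union>i\<in>?R. Si i)" unfolding kostka_def S ..
  also have "\<dots> = (\<Sum>i\<in>?R. card (Si i))"
  proof (rule card_UN_disjoint[OF finR])
    show "\<forall>i\<in>?R. finite (Si i)" unfolding Si_def using finite_ssyt by auto
  qed (use disj in auto)
  also have "\<dots> = (\<Sum>i\<in>?R. kostka (dec l i) t)" by (rule sum.cong) (auto simp: card_Si)
  finally show ?thesis .
qed



lemma length_le_sum_list: "0 \<notin> set xs \<Longrightarrow> length xs \<le> sum_list (xs :: nat list)"
  by (induct xs) auto

lemma finite_partitions: "finite (partitions_of k)"
proof (rule finite_subset)
  show "partitions_of k \<subseteq> {xs. set xs \<subseteq> {..k} \<and> length xs \<le> k}"
    unfolding partitions_of_def is_partition_def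
    using length_le_sum_list member_le_sum_list by fastforce
qed (rule finite_lists_length_le, simp)

lemma sum_pad: "length l \<le> n \<Longrightarrow> (\<Sum>i<n. pad l i) = sum_list l"
proof -
  assume n: "length l \<le> n"
  have "sum_list l = (\<Sum>i<length l. l ! i)" by (simp add: sum_list_sum_nth atLeast0LessThan)
  also have "\<dots> = (\<Sum>i<length l. pad l i)" by (rule sum.cong) (auto simp: pad_def)
  also have "\<dots> = (\<Sum>i<n. pad l i)"
    by (rule sum.mono_neutral_left) (use n in \<open>auto simp: pad_def\<close>)
  finally show ?thesis by simp
qed

lemma pad_inj:
  assumes "is_partition a" "is_partition b" "pad a = pad b"
  shows "a = b"
proof -
  have pos: "0 < pad x i \<longleftrightarrow> i < length x" if "is_partition x" for x i
  proof -
    have "x ! i \<noteq> 0" if "i < length x" using that \<open>is_partition x\<close> nth_mem[OF that]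
      unfolding is_partition_def by metis
    thus ?thesis unfolding pad_def by auto
  qed
  have "length a = length b"
    using pos[OF assms(1)] pos[OF assms(2)] assms(3) by (metis nat_neq_iff)
  moreover have "a ! i = b ! i" if "i < length a" for i
    using that assms(3) \<open>length a = length b\<close> unfolding pad_def by (metis)
  ultimately show ?thesis by (rule nth_equalityI)
qed

lemma exists_less:
  assumes "length a \<le> N" "length b \<le> N" "sum_list a = sum_list b" "pad a \<noteq> pad b"
  shows "\<exists>i<N. pad a i < pad b i"
proof (rule ccontr)
  assume "\<not> ?thesis"
  hence le: "\<And>i. i < N \<Longrightarrow> pad b i \<le> pad a i" by (meson not_less)
  have "\<exists>i. pad a i \<noteq> pad b i" using assms(4) by auto
  then obtain i where i: "pad a i \<noteq> pad b i" by blast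
  have iN: "i < N" using i assms(1,2) unfolding pad_def by (cases "i < N") auto
  have "(\<Sum>i<N. pad b i) < (\<Sum>i<N. pad a i)"
  proof (rule sum_strict_mono_ex1)
    show "\<forall>x\<in>{..<N}. pad b x \<le> pad a x" using le by auto
    have "pad b i < pad a i" using le[OF iN] i by simp
    thus "\<exists>x\<in>{..<N}. pad b x < pad a x" using iN by auto
  qed simp
  thus False using sum_pad[OF assms(1)] sum_pad[OF assms(2)] assms(3) by simp
qed

lemma wd_of_partition: "nu \<in> partitions_of k \<Longrightarrow> wd nu"
  unfolding partitions_of_def is_partition_def by simp

lemma strip_zeros:
  assumes "wd l"
  shows "is_partition (takeWhile (\<lambda>x. x \<noteq> 0) l)" "pad (takeWhile (\<lambda>x. x \<noteq> 0) l) = pad l"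
proof -
  let ?t = "takeWhile (\<lambda>x. x \<noteq> 0) l"
  have "l = ?t @ dropWhile (\<lambda>x. x \<noteq> 0) l" by simp
  hence "wd ?t" using assms by (metis sorted_wrt_append)
  moreover have "0 \<notin> set ?t" by (auto dest: set_takeWhileD)
  ultimately show "is_partition ?t" unfolding is_partition_def by simp
  show "pad ?t = pad l"
  proof
    fix i
    show "pad ?t i = pad l i"
    proof (cases "i < length ?t")
      case True
      have "length ?t \<le> length l" by (rule length_takeWhile_le)
      thus ?thesis using True by (auto simp: pad_def takeWhile_nth)
    next
      case False
      have "pad l i = 0"
      proof (cases "length ?t < length l")
        case True
        have z: "l ! length ?t = 0" using nth_length_takeWhile[OF True] by simp
        have "pad l i \<le> pad l (length ?t)" using pad_mono[OF assms] False by simp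
        thus ?thesis using z True by (simp add: pad_def)
      next
        case False
        hence "length ?t = length l" by (metis le_neq_implies_less length_takeWhile_le)
        thus ?thesis using \<open>\<not> i < length ?t\<close> by (simp add: pad_def)
      qed
      thus ?thesis using False by (simp add: pad_def)
    qed
  qed
qed

lemma sum_list_pad_eq: "pad a = pad b \<Longrightarrow> sum_list a = sum_list b"
  using sum_pad[of a "max (length a) (length b)"] sum_pad[of b "max (length a) (length b)"] by simp

lemma main:
  assumes mu: "mu \<in> partitions_of k"
  shows "wd l \<Longrightarrow> sum_list l = k + r \<Longrightarrow> real (kostka l (mu @ replicate r 1)) =
     fact r * (\<Sum>nu\<in>partitions_of k. real (kostka nu mu) * Adet (max (length l) (length nu)) (\<lambda>i. int (pad l i)) nu)"
proof (induction r arbitrary: l)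
  case 0
  let ?P = "partitions_of k"
  define nu0 where "nu0 = takeWhile (\<lambda>x. x \<noteq> 0) l"
  have p0: "is_partition nu0" "pad nu0 = pad l" using strip_zeros[OF "0.prems"(1)] nu0_def by auto
  have nu0P: "nu0 \<in> ?P" using p0 sum_list_pad_eq[OF p0(2)] "0.prems"(2) unfolding partitions_of_def by simp
  have "(\<Sum>nu\<in>?P. real (kostka nu mu) * Adet (max (length l) (length nu)) (\<lambda>i. int (pad l i)) nu)
      = (\<Sum>nu\<in>?P. if nu = nu0 then real (kostka nu0 mu) else 0)"
  proof (rule sum.cong[OF refl])
    fix nu assume nu: "nu \<in> ?P"
    show "real (kostka nu mu) * Adet (max (length l) (length nu)) (\<lambda>i. int (pad l i)) nu
        = (if nu = nu0 then real (kostka nu0 mu) else 0)"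
    proof (cases "nu = nu0")
      case True
      have "Adet (max (length l) (length nu)) (\<lambda>i. int (pad l i)) nu = 1"
        using Adet_self[of nu0] p0 True unfolding is_partition_def by (metis)
      thus ?thesis using True by simp
    next
      case False
      have pn: "is_partition nu" "sum_list nu = k" using nu unfolding partitions_of_def by auto
      have "pad nu \<noteq> pad l" using pad_inj[OF pn(1) p0(1)] p0(2) False by auto
      then obtain i0 where i0: "i0 < max (length l) (length nu)" "pad l i0 < pad nu i0"
        using exists_less[of l "max (length l) (length nu)" nu] pn "0.prems" by auto
      have "Adet (max (length l) (length nu)) (\<lambda>i. int (pad l i)) nu = 0"
        by (rule Adet_zero_less[OF "0.prems"(1) wd_of_partition[OF nu] i0])
      thus ?thesis using False by simp
    qed
  qed
  also have "\<dots> = real (kostka nu0 mu)" using nu0P finite_partitions by (simp add: sum.delta')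
  also have "kostka nu0 mu = kostka l mu" by (rule kostka_cells_eq) (simp add: cells_pad p0(2))
  finally show ?case by simp
next
  case (Suc r)
  let ?P = "partitions_of k"
  let ?R = "{i. removable (l::nat list) i}"
  let ?x = "\<lambda>i. int (pad l i)"
  let ?n = "\<lambda>nu::nat list. max (length l) (length nu)"
  have finR: "finite ?R" by (rule finite_subset[of _ "{..<length l}"]) (auto simp: removable_def)
  have "real (kostka l (mu @ replicate (Suc r) 1)) = real (kostka l ((mu @ replicate r 1) @ [1]))"
    by (simp add: replicate_append_same)
  also have "\<dots> = (\<Sum>i\<in>?R. real (kostka (dec l i) (mu @ replicate r 1)))"
    unfolding kostka_corner[OF Suc.prems(1)] by (simp add: of_nat_sum)
  also have "\<dots> = (\<Sum>i\<in>?R. fact r * (\<Sum>nu\<in>?P. real (kostka nu mu) *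
        Adet (?n nu) (?x(i := ?x i - 1)) nu))"
  proof (rule sum.cong[OF refl])
    fix i assume i: "i \<in> ?R"
    have r: "removable l i" using i by simp
    have il: "i < length l" "0 < pad l i" using r unfolding removable_def pad_def by auto
    have x: "(\<lambda>j. int (pad (dec l i) j)) = ?x(i := ?x i - 1)"
      using il by (auto simp: pad_dec fun_eq_iff of_nat_diff)
    have "real (kostka (dec l i) (mu @ replicate r 1)) = fact r * (\<Sum>nu\<in>?P. real (kostka nu mu) *
        Adet (max (length (dec l i)) (length nu)) (\<lambda>j. int (pad (dec l i) j)) nu)"
      by (rule Suc.IH) (use wd_dec[OF Suc.prems(1) r] sum_list_dec[OF r] Suc.prems(2) in auto)
    thus "real (kostka (dec l i) (mu @ replicate r 1)) = fact r * (\<Sum>nu\<in>?P. real (kostka nu mu) *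
        Adet (?n nu) (?x(i := ?x i - 1)) nu)" unfolding x by simp
  qed
  also have "\<dots> = fact r * (\<Sum>nu\<in>?P. real (kostka nu mu) * (\<Sum>i\<in>?R. Adet (?n nu) (?x(i := ?x i - 1)) nu))"
    by (simp add: sum_distrib_left sum_distrib_right sum.swap[of _ ?R] mult.assoc)
  also have "\<dots> = fact r * (\<Sum>nu\<in>?P. real (kostka nu mu) * (real (Suc r) * Adet (?n nu) ?x nu))"
  proof -
    have "(\<Sum>i\<in>?R. Adet (?n nu) (?x(i := ?x i - 1)) nu) = real (Suc r) * Adet (?n nu) ?x nu"
      if nu: "nu \<in> ?P" for nu
    proof -
      have "(\<Sum>i\<in>?R. Adet (?n nu) (?x(i := ?x i - 1)) nu) = (\<Sum>i<?n nu. Adet (?n nu) (?x(i := ?x i - 1)) nu)"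
      proof (rule sum.mono_neutral_left)
        show "?R \<subseteq> {..<?n nu}" by (auto simp: removable_def)
        show "\<forall>i\<in>{..<?n nu} - ?R. Adet (?n nu) (?x(i := ?x i - 1)) nu = 0"
        proof
          fix i assume i: "i \<in> {..<?n nu} - ?R"
          show "Adet (?n nu) (?x(i := ?x i - 1)) nu = 0"
          proof (cases "pad l i = 0")
            case True
            thus ?thesis using Adet_vanish1[OF Suc.prems(1), of i "?n nu"] i by auto
          next
            case False
            hence il: "i < length l" by (auto simp: pad_def split: if_splits)
            have "pad l (Suc i) \<le> pad l i" by (rule pad_mono[OF Suc.prems(1)]) simp
            moreover have "\<not> pad l (Suc i) < pad l i" using i il False by (auto simp: removable_def pad_def)
            ultimately have eq: "pad l (Suc i) = pad l i" by simp
            hence "Suc i < length l" using False by (auto simp: pad_def split: if_splits)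
            hence "Suc i < ?n nu" by simp
            thus ?thesis using Adet_vanish2[OF _ eq] by auto
          qed
        qed
      qed simp
      also have "\<dots> = (of_int (\<Sum>i<?n nu. ?x i) - real (\<Sum>j<?n nu. pad nu j)) * Adet (?n nu) ?x nu"
        by (rule Adet_rec)
      also have "(\<Sum>i<?n nu. ?x i) = int (k + Suc r)"
        using sum_pad[of l "?n nu"] Suc.prems(2) by (simp flip: of_nat_sum)
      also have "(\<Sum>j<?n nu. pad nu j) = k" using sum_pad[of nu "?n nu"] nu unfolding partitions_of_def by simp
      also have "of_int (int (k + Suc r)) - real k = real (Suc r)" by simp
      finally show ?thesis .
    qed
    thus ?thesis by (intro arg_cong[where f="\<lambda>s. fact r * s"] sum.cong) auto
  qed
  also have "\<dots> = fact (Suc r) * (\<Sum>nu\<in>?P. real (kostka nu mu) * Adet (?n nu) ?x nu)"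
    by (simp add: sum_distrib_left mult_ac)
  finally show ?case .
qed



lemma ffact_r_Suc: "ffact_r x (Suc m) = ffact_r x m * (x - of_nat m)"
  unfolding ffact_r_def by (simp add: lessThan_Suc)

lemma ffact_r_nat: "ffact_r (real l) m = (if m \<le> l then fact l / fact (l - m) else 0)"
proof (induction m)
  case 0 thus ?case by (simp add: ffact_r_def)
next
  case (Suc m)
  show ?case
  proof (cases "Suc m \<le> l")
    case True
    have f: "(fact (l - m) :: real) = real (l - m) * fact (l - Suc m)"
      using True by (metis Suc_diff_Suc fact_Suc Suc_le_lessD)
    have "ffact_r (real l) (Suc m) = fact l / fact (l - m) * (real l - real m)"
      using Suc True by (simp add: ffact_r_Suc)
    also have "\<dots> = fact l / fact (l - Suc m)"
      unfolding f using True by (simp add: of_nat_diff field_simps)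
    finally show ?thesis using True by simp
  next
    case False
    show ?thesis
    proof (cases "m = l")
      case True thus ?thesis using False by (simp add: ffact_r_Suc ffact_r_def)
    next
      case False
      thus ?thesis using Suc \<open>\<not> Suc m \<le> l\<close> by (simp add: ffact_r_Suc)
    qed
  qed
qed

lemma ffact_r_rf: "ffact_r (real l) m = fact l * rf (int l - int m)"
  unfolding ffact_r_nat rf_def by (auto simp: nat_diff_distrib)

lemma det_mat_cong:
  assumes "\<And>i j. i < n \<Longrightarrow> j < n \<Longrightarrow> f (i,j) = g (i,j)"
  shows "det (mat n n f) = det (mat n n g)"
proof -
  have "(\<Prod>i=0..<n. f (i, p i)) = (\<Prod>i=0..<n. g (i, p i))" if "p permutes {0..<n}" for p
    using assms permutes_in_image[OF that] by (auto intro!: prod.cong)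
  thus ?thesis unfolding det_mat_leibniz by (auto intro!: sum.cong)
qed

lemma det_row_mult:
  "det (mat n n (\<lambda>(i,j). c i * f i j)) = (\<Prod>i<n. c i) * det (mat n n (\<lambda>(i,j). f i j))"
proof -
  have "(\<Prod>i=0..<n. c i * f i (p i)) = (\<Prod>i<n. c i) * (\<Prod>i=0..<n. f i (p i))" for p
    by (simp add: prod.distrib atLeast0LessThan)
  thus ?thesis unfolding det_mat_leibniz by (simp add: sum_distrib_left mult_ac)
qed

lemma schur_at_Adet:
  "shifted_schur_at nu l = Adet (max (length l) (length nu)) (\<lambda>i. int (pad l i)) nu
                          / Adet (max (length l) (length nu)) (\<lambda>i. int (pad l i)) []"
proof -
  define n where "n = max (length l) (length nu)"
  define L where "L i = pad l i + n - Suc i" for i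
  have gen: "det (mat n n (\<lambda>(i, j). ffact_r ((if i < length l then real (l ! i) else 0) + real n - real (Suc i)) (pad v j + n - Suc j)))
     = (\<Prod>i<n. fact (L i)) * Adet n (\<lambda>i. int (pad l i)) v" for v
  proof -
    have "det (mat n n (\<lambda>(i, j). ffact_r ((if i < length l then real (l ! i) else 0) + real n - real (Suc i)) (pad v j + n - Suc j)))
       = det (mat n n (\<lambda>(i,j). fact (L i) * rf (int (pad l i) - int (pad v j) - int i + int j)))"
    proof (rule det_mat_cong)
      fix i j assume ij: "i < n" "j < n"
      have "(if i < length l then real (l ! i) else 0) + real n - real (Suc i) = real (L i)"
        using ij unfolding L_def pad_def by auto
      moreover have "int (L i) - int (pad v j + n - Suc j) = int (pad l i) - int (pad v j) - int i + int j"
        using ij unfolding L_def by auto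
      ultimately show "(\<lambda>(i, j). ffact_r ((if i < length l then real (l ! i) else 0) + real n - real (Suc i)) (pad v j + n - Suc j)) (i, j)
          = (\<lambda>(i,j). fact (L i) * rf (int (pad l i) - int (pad v j) - int i + int j)) (i, j)"
        by (simp add: ffact_r_rf)
    qed
    also have "\<dots> = (\<Prod>i<n. fact (L i)) * Adet n (\<lambda>i. int (pad l i)) v"
      unfolding Adet_def by (rule det_row_mult)
    finally show ?thesis .
  qed
  have nz: "(\<Prod>i<n. fact (L i) :: real) \<noteq> 0" by simp
  have num: "(\<lambda>j. if j < length nu then nu ! j else 0) = pad nu" by (auto simp: pad_def)
  have den: "(\<lambda>j. n - Suc j) = (\<lambda>j. pad [] j + n - Suc j)" by (auto simp: pad_def)
  show ?thesis
    unfolding shifted_schur_at_def shifted_schur_def n_def[symmetric]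
    using gen[of nu] gen[of "[]"] nz by (simp add: pad_def)
qed



lemma partitions_0: "partitions_of 0 = {[]}"
proof -
  have "nu = []" if "is_partition nu" "sum_list nu = 0" for nu
    using that unfolding is_partition_def by (cases nu) auto
  thus ?thesis unfolding partitions_of_def is_partition_def by auto
qed

lemma kostka_nil: "kostka [] [] = 1"
proof -
  have "{T. is_ssyt [] [] T} = {\<lambda>_ _. 0}"
    unfolding is_ssyt_def cells_def by (auto simp: fun_eq_iff)
  thus ?thesis unfolding kostka_def by simp
qed

lemma kostka_std0:
  assumes "wd l"
  shows "real (kostka l (replicate (sum_list l) 1)) = fact (sum_list l) * Adet (length l) (\<lambda>i. int (pad l i)) []"
proof -
  have m: "([]::nat list) \<in> partitions_of 0" unfolding partitions_of_def is_partition_def by simp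
  have "real (kostka l ([] @ replicate (sum_list l) 1)) = fact (sum_list l) *
     (\<Sum>nu\<in>partitions_of 0. real (kostka nu []) * Adet (max (length l) (length nu)) (\<lambda>i. int (pad l i)) nu)"
    by (rule main[OF m assms]) simp
  thus ?thesis unfolding partitions_0 by (simp add: kostka_nil)
qed

lemma kostka_std:
  assumes "wd l" "length l \<le> N"
  shows "real (kostka l (replicate (sum_list l) 1)) = fact (sum_list l) * Adet N (\<lambda>i. int (pad l i)) []"
proof -
  define l' where "l' = l @ replicate (N - length l) 0"
  have pad': "pad l' = pad l" unfolding l'_def pad_def by (auto simp: fun_eq_iff nth_append)
  have "wd (replicate m (0::nat))" for m by (induct m) auto
  hence wd': "wd l'" unfolding l'_def using assms(1) by (auto simp: sorted_wrt_append)
  have len: "length l' = N" unfolding l'_def using assms(2) by simp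
  have sum: "sum_list l' = sum_list l" unfolding l'_def by simp
  have "kostka l' (replicate (sum_list l) 1) = kostka l (replicate (sum_list l) 1)"
    by (rule kostka_cells_eq) (simp add: cells_pad pad')
  thus ?thesis using kostka_std0[OF wd'] unfolding pad' len sum by simp
qed

lemma exists_less2:
  assumes "length a \<le> N" "length b \<le> N" "sum_list a < sum_list b"
  shows "\<exists>i<N. pad a i < pad b i"
proof (rule ccontr)
  assume "\<not> ?thesis"
  hence "\<And>i. i \<in> {..<N} \<Longrightarrow> pad b i \<le> pad a i" by (meson lessThan_iff not_less)
  hence "(\<Sum>i<N. pad b i) \<le> (\<Sum>i<N. pad a i)" by (rule sum_mono)
  thus False using sum_pad[OF assms(1)] sum_pad[OF assms(2)] assms(3) by simp
qed

theorem proposition2p6: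
  fixes mu :: "nat list" and k :: nat
  assumes "mu \<in> partitions_of k"
  shows "\<forall>lam. is_partition lam \<longrightarrow>
           Ko mu lam = (\<Sum>nu \<in> partitions_of k. real (kostka nu mu) * shifted_schur_at nu lam)"
proof (intro allI impI)
  fix lam assume lp: "is_partition lam"
  have wl: "wd lam" using lp unfolding is_partition_def by simp
  define n where "n = sum_list lam"
  define F where "F = real (kostka lam (replicate n 1))"
  let ?P = "partitions_of k"
  let ?N = "\<lambda>nu::nat list. max (length lam) (length nu)"
  let ?x = "\<lambda>i. int (pad lam i)"
  have smu: "sum_list mu = k" using assms unfolding partitions_of_def by simp
  have den: "Adet (?N nu) ?x [] = F / fact n" for nu
    using kostka_std[OF wl, of "?N nu"] unfolding F_def n_def by simp
  have ssa: "shifted_schur_at nu lam = Adet (?N nu) ?x nu * fact n / F" for nu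
    unfolding schur_at_Adet den by simp
  show "Ko mu lam = (\<Sum>nu\<in>?P. real (kostka nu mu) * shifted_schur_at nu lam)"
  proof (cases "k \<le> n")
    case True
    define S where "S = (\<Sum>nu\<in>?P. real (kostka nu mu) * Adet (?N nu) ?x nu)"
    have K: "real (kostka lam (mu @ replicate (n - k) 1)) = fact (n - k) * S"
      unfolding S_def by (rule main[OF assms wl]) (use True n_def in simp)
    have ff: "ffact_r (real n) k * fact (n - k) = fact n"
      using True by (simp add: ffact_r_nat)
    have "Ko mu lam = ffact_r (real n) k * real (kostka lam (mu @ replicate (n - k) 1)) / F"
      unfolding Ko_def Let_def smu n_def[symmetric] F_def using True by simp
    also have "\<dots> = fact n * S / F" unfolding K by (simp flip: ff add: mult_ac)
    also have "\<dots> = (\<Sum>nu\<in>?P. real (kostka nu mu) * shifted_schur_at nu lam)"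
      unfolding ssa S_def by (simp add: sum_divide_distrib sum_distrib_left sum_distrib_right mult_ac)
    finally show ?thesis .
  next
    case False
    have "Ko mu lam = 0" unfolding Ko_def Let_def smu n_def[symmetric] using False by simp
    also have "\<dots> = (\<Sum>nu\<in>?P. real (kostka nu mu) * shifted_schur_at nu lam)"
    proof (rule sum.neutral[symmetric], rule ballI)
      fix nu assume nu: "nu \<in> ?P"
      have "sum_list lam < sum_list nu" using nu False unfolding partitions_of_def n_def by simp
      then obtain i0 where i0: "i0 < ?N nu" "pad lam i0 < pad nu i0"
        using exists_less2[of lam "?N nu" nu] by auto
      have "Adet (?N nu) ?x nu = 0" by (rule Adet_zero_less[OF wl wd_of_partition[OF nu] i0])
      thus "real (kostka nu mu) * shifted_schur_at nu lam = 0" unfolding ssa by simp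
    qed
    finally show ?thesis .
  qed
qed

end
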